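(* Let $(W;T,\rho)$ be an ENE-representation of an ENL algebra $(\mathfrak g,[\cdot,\cdot]_{\mathfrak g},E)$. Define $\rho^*:\mathfrak g\to\mathfrak{gl}(W^* )$ by $\langle\rho^*(x)\xi,u\rangle=-\langle\xi,\rho(x)u\rangle$ and $T^*:W^*\to W^*$ by $\langle T^*\xi,u\rangle=\langle\xi,Tu\rangle$. Then $(W^*;T^*,\rho^* )$ is an ENE-representation of $(\mathfrak g,[\cdot,\cdot]_{\mathfrak g},E)$.
   Context: Vector spaces are finite-dimensional over an algebraically closed field of characteristic zero. An ENL algebra $(\mathfrak g,[\cdot,\cdot],E)$ is a Lie algebra with linear $E$ satisfying $E[x,y]=[x,Ey]$ for all $x,y$. An ENE-representation $(W;T,\rho)$ of $(\mathfrak g,E)$ is a Lie algebra representation $\rho:\mathfrak g\to\mathfrak{gl}(W)$ with linear $T:W\to W$ such that $T(\rho(x)u)=\rho(Ex)u=\rho(x)(Tu)$ for all $x\in\mathfrak g,u\in W$. *)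

theory Defs
  imports Main "HOL.Vector_Spaces" "HOL-Library.Function_Algebras"
begin

text \<open>Standing assumption on the ground field: algebraically closed
 (characteristic zero is imposed by the type class field_char_0).\<close>
definition alg_closed_field :: "'k::field itself \<Rightarrow> bool" where
  "alg_closed_field _ \<longleftrightarrow>
     (\<forall>(n::nat) (a::nat \<Rightarrow> 'k). n \<ge> 1 \<longrightarrow> (\<exists>x. x ^ n + (\<Sum>i<n. a i * x ^ i) = 0))"

definition fd_subspace :: "('k::field \<Rightarrow> 'v::ab_group_add \<Rightarrow> 'v) \<Rightarrow> 'v set \<Rightarrow> bool" where
  "fd_subspace s V \<longleftrightarrow> vector_space s \<and> module.subspace s V \<and>
     (\<exists>B. finite B \<and> B \<subseteq> V \<and> module.span s B = V)"

definition lie_algebra :: "('k::field \<Rightarrow> 'g::ab_group_add \<Rightarrow> 'g) \<Rightarrow> ('g \<Rightarrow> 'g \<Rightarrow> 'g) \<Rightarrow> bool" where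
  "lie_algebra s br \<longleftrightarrow> fd_subspace s UNIV \<and>
     (\<forall>x. Vector_Spaces.linear s s (br x)) \<and>
     (\<forall>y. Vector_Spaces.linear s s (\<lambda>x. br x y)) \<and>
     (\<forall>x. br x x = 0) \<and>
     (\<forall>x y z. br x (br y z) + br y (br z x) + br z (br x y) = 0)"

definition ENL_algebra :: "('k::field \<Rightarrow> 'g::ab_group_add \<Rightarrow> 'g) \<Rightarrow> ('g \<Rightarrow> 'g \<Rightarrow> 'g) \<Rightarrow> ('g \<Rightarrow> 'g) \<Rightarrow> bool" where
  "ENL_algebra s br E \<longleftrightarrow> lie_algebra s br \<and> Vector_Spaces.linear s s E \<and>
     (\<forall>x y. E (br x y) = br x (E y))"

text \<open>ENE-representation (W;T,\<rho>) of (g,E), where W is given as a finite-dimensional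
 subspace V of an ambient vector space with scalar multiplication sw; the maps
 \<rho> x and T are only required to act on V (elements of gl(V)).\<close>
definition ENE_rep ::
  "('k::field \<Rightarrow> 'g::ab_group_add \<Rightarrow> 'g) \<Rightarrow> ('g \<Rightarrow> 'g \<Rightarrow> 'g) \<Rightarrow> ('g \<Rightarrow> 'g) \<Rightarrow>
   ('k \<Rightarrow> 'w::ab_group_add \<Rightarrow> 'w) \<Rightarrow> 'w set \<Rightarrow> ('w \<Rightarrow> 'w) \<Rightarrow> ('g \<Rightarrow> 'w \<Rightarrow> 'w) \<Rightarrow> bool" where
  "ENE_rep sg br E sw V T \<rho> \<longleftrightarrow> fd_subspace sw V \<and>
     \<comment> \<open>each \<rho> x is a linear endomorphism of V\<close>
     (\<forall>x. \<forall>u\<in>V. \<rho> x u \<in> V) \<and>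
     (\<forall>x. \<forall>u\<in>V. \<forall>v\<in>V. \<rho> x (u + v) = \<rho> x u + \<rho> x v) \<and>
     (\<forall>x c. \<forall>u\<in>V. \<rho> x (sw c u) = sw c (\<rho> x u)) \<and>
     \<comment> \<open>\<rho> is linear in x\<close>
     (\<forall>x y. \<forall>u\<in>V. \<rho> (x + y) u = \<rho> x u + \<rho> y u) \<and>
     (\<forall>x c. \<forall>u\<in>V. \<rho> (sg c x) u = sw c (\<rho> x u)) \<and>
     \<comment> \<open>\<rho> is a Lie algebra homomorphism into gl(V)\<close>
     (\<forall>x y. \<forall>u\<in>V. \<rho> (br x y) u = \<rho> x (\<rho> y u) - \<rho> y (\<rho> x u)) \<and>
     \<comment> \<open>T is a linear endomorphism of V\<close>
     (\<forall>u\<in>V. T u \<in> V) \<and>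
     (\<forall>u\<in>V. \<forall>v\<in>V. T (u + v) = T u + T v) \<and>
     (\<forall>c. \<forall>u\<in>V. T (sw c u) = sw c (T u)) \<and>
     \<comment> \<open>compatibility T(\<rho>(x)u) = \<rho>(Ex)u = \<rho>(x)(Tu)\<close>
     (\<forall>x. \<forall>u\<in>V. T (\<rho> x u) = \<rho> (E x) u \<and> \<rho> (E x) u = \<rho> x (T u))"

text \<open>Dual space W* of the whole space 'w: linear functionals, inside the
 function space 'w \<Rightarrow> 'k with pointwise operations.\<close>
definition dual_space :: "('k::field \<Rightarrow> 'w::ab_group_add \<Rightarrow> 'w) \<Rightarrow> ('w \<Rightarrow> 'k) set" where
  "dual_space sw = {\<xi>. Vector_Spaces.linear sw (*) \<xi>}"

definition dual_scale :: "'k::field \<Rightarrow> ('w \<Rightarrow> 'k) \<Rightarrow> ('w \<Rightarrow> 'k)" where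
  "dual_scale c \<xi> = (\<lambda>u. c * \<xi> u)"

definition dual_rep :: "('g \<Rightarrow> 'w \<Rightarrow> 'w) \<Rightarrow> 'g \<Rightarrow> ('w \<Rightarrow> 'k::field) \<Rightarrow> ('w \<Rightarrow> 'k)" where
  "dual_rep \<rho> x \<xi> = (\<lambda>u. - \<xi> (\<rho> x u))"

definition dual_map :: "('w \<Rightarrow> 'w) \<Rightarrow> ('w \<Rightarrow> 'k::field) \<Rightarrow> ('w \<Rightarrow> 'k)" where
  "dual_map T \<xi> = (\<lambda>u. \<xi> (T u))"

end

theory Submission
  imports Defs
begin

lemma fun_sum_apply: "finite A \<Longrightarrow> (sum f A) x = (\<Sum>a\<in>A. f a x)"
  by (induction A rule: finite_induct) (auto simp: plus_fun_def zero_fun_def)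

lemma vs_self: "vector_space ((*) :: 'k::field \<Rightarrow> 'k \<Rightarrow> 'k)"
  by unfold_locales (auto simp: algebra_simps)

lemma vs_dual: "vector_space (dual_scale :: 'k::field \<Rightarrow> ('w \<Rightarrow> 'k) \<Rightarrow> _)"
  by unfold_locales (auto simp: dual_scale_def algebra_simps plus_fun_def)

lemma lin_iff:
  assumes "vector_space sw"
  shows "Vector_Spaces.linear sw (*) \<xi> \<longleftrightarrow>
    (\<forall>x y. \<xi> (x + y) = \<xi> x + \<xi> y) \<and> (\<forall>c x. \<xi> (sw c x) = c * \<xi> x)"
  using assms vs_self by (auto simp: linear_iff)

theorem proposition1p14:
  fixes sg :: "'k::field_char_0 \<Rightarrow> 'g::ab_group_add \<Rightarrow> 'g"
    and br :: "'g \<Rightarrow> 'g \<Rightarrow> 'g"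
    and E :: "'g \<Rightarrow> 'g"
    and sw :: "'k \<Rightarrow> 'w::ab_group_add \<Rightarrow> 'w"
    and T :: "'w \<Rightarrow> 'w"
    and \<rho> :: "'g \<Rightarrow> 'w \<Rightarrow> 'w"
  assumes "alg_closed_field TYPE('k)"
    and "ENL_algebra sg br E"
    and "ENE_rep sg br E sw UNIV T \<rho>"
  shows "ENE_rep sg br E dual_scale (dual_space sw) (dual_map T) (dual_rep \<rho>)"
proof -
  note R = assms(3)[unfolded ENE_rep_def]
  have vsw: "vector_space sw" using R by (simp add: fd_subspace_def)
  interpret W: vector_space sw by (rule vsw)
  interpret D: vector_space "dual_scale :: 'k \<Rightarrow> ('w \<Rightarrow> 'k) \<Rightarrow> _" by (rule vs_dual)
  have mem: "\<xi> \<in> dual_space sw \<longleftrightarrow>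
    (\<forall>x y. \<xi> (x + y) = \<xi> x + \<xi> y) \<and> (\<forall>c x. \<xi> (sw c x) = c * \<xi> x)" for \<xi>
    unfolding dual_space_def using lin_iff[OF vsw] by simp
  have add: "\<xi> \<in> dual_space sw \<Longrightarrow> \<xi> (x + y) = \<xi> x + \<xi> y" for \<xi> x y using mem by blast
  have scl: "\<xi> \<in> dual_space sw \<Longrightarrow> \<xi> (sw c x) = c * \<xi> x" for \<xi> c x using mem by blast
  have diff: "\<xi> \<in> dual_space sw \<Longrightarrow> \<xi> (x - y) = \<xi> x - \<xi> y" for \<xi> x y
    using add[of \<xi> "x - y" y] by (simp add: algebra_simps)
  have sub: "D.subspace (dual_space sw)"
    unfolding D.subspace_def
  proof (intro conjI ballI allI)
    show "0 \<in> dual_space sw" unfolding mem by (simp add: zero_fun_def)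
  next
    fix \<xi> \<eta> :: "'w \<Rightarrow> 'k" assume a: "\<xi> \<in> dual_space sw" "\<eta> \<in> dual_space sw"
    show "\<xi> + \<eta> \<in> dual_space sw" unfolding mem
      by (simp add: plus_fun_def add[OF a(1)] add[OF a(2)] scl[OF a(1)] scl[OF a(2)] algebra_simps)
  next
    fix c and \<xi> :: "'w \<Rightarrow> 'k" assume a: "\<xi> \<in> dual_space sw"
    show "dual_scale c \<xi> \<in> dual_space sw" unfolding mem
      by (simp add: dual_scale_def add[OF a] scl[OF a] algebra_simps)
  qed
  have fd: "fd_subspace dual_scale (dual_space sw)"
  proof -
    obtain B where B: "finite B" "W.span B = UNIV" using R by (auto simp: fd_subspace_def)
    obtain B' where B': "W.independent B'" "UNIV \<subseteq> W.span B'"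
      using W.basis_exists[of UNIV] by blast
    have spB': "W.span B' = UNIV" using B' by blast
    have fB': "finite B'" using W.independent_span_bound[OF B(1) B'(1)] B(2) by auto
    define Ds where "Ds = (\<lambda>b. \<lambda>v. W.representation B' v b) ` B'"
    have DsV: "Ds \<subseteq> dual_space sw"
      unfolding Ds_def dual_space_def using W.linear_representation[OF B'(1) spB'] by auto
    have "D.span Ds = dual_space sw"
    proof
      show "D.span Ds \<subseteq> dual_space sw" by (rule D.span_minimal[OF DsV sub])
      show "dual_space sw \<subseteq> D.span Ds"
      proof
        fix \<xi> :: "'w \<Rightarrow> 'k" assume x: "\<xi> \<in> dual_space sw"
        have lx: "Vector_Spaces.linear sw (*) \<xi>" using x dual_space_def by blast
        have eq: "\<xi> = (\<Sum>b\<in>B'. dual_scale (\<xi> b) (\<lambda>v. W.representation B' v b))"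
        proof
          fix v
          have "\<xi> v = \<xi> (\<Sum>b\<in>B'. sw (W.representation B' v b) b)"
            using W.sum_representation_eq[OF B'(1) _ fB' order_refl, of v] spB' by simp
          also have "\<dots> = (\<Sum>b\<in>B'. W.representation B' v b * \<xi> b)"
            using module_hom.sum[OF lx[unfolded linear_iff_module_hom], of "\<lambda>b. sw (W.representation B' v b) b" B'] module_hom.scale[OF lx[unfolded linear_iff_module_hom]] by simp
          finally show "\<xi> v = (\<Sum>b\<in>B'. dual_scale (\<xi> b) (\<lambda>v. W.representation B' v b)) v"
            by (simp add: fun_sum_apply[OF fB'] dual_scale_def mult.commute)
        qed
        show "\<xi> \<in> D.span Ds"
          by (subst eq, rule D.span_sum, rule D.span_scale, rule D.span_base) (auto simp: Ds_def)
      qed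
    qed
    then show ?thesis unfolding fd_subspace_def using vs_dual sub DsV Ds_def fB' by blast
  qed
  have lin\<rho>: "\<rho> x (u + v) = \<rho> x u + \<rho> x v" "\<rho> x (sw c u) = sw c (\<rho> x u)" for x u v c
    using R by auto
  have linT: "T (u + v) = T u + T v" "T (sw c u) = sw c (T u)" for u v c
    using R by auto
  show ?thesis
    unfolding ENE_rep_def
  proof (intro conjI fd allI ballI)
    fix x and \<xi> :: "'w \<Rightarrow> 'k" assume "\<xi> \<in> dual_space sw"
    then show "dual_rep \<rho> x \<xi> \<in> dual_space sw"
      unfolding mem dual_rep_def using lin\<rho> by (simp add: scl add)
  next
    fix \<xi> :: "'w \<Rightarrow> 'k" assume "\<xi> \<in> dual_space sw"
    then show "dual_map T \<xi> \<in> dual_space sw"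
      unfolding mem dual_map_def using linT by (simp add: scl add)
  next
    fix x y and \<xi> :: "'w \<Rightarrow> 'k" assume x: "\<xi> \<in> dual_space sw"
    show "dual_rep \<rho> (br x y) \<xi> = dual_rep \<rho> x (dual_rep \<rho> y \<xi>) - dual_rep \<rho> y (dual_rep \<rho> x \<xi>)"
      using R by (auto simp: dual_rep_def diff[OF x] fun_eq_iff)
    show "dual_rep \<rho> (x + y) \<xi> = dual_rep \<rho> x \<xi> + dual_rep \<rho> y \<xi>"
      using R by (auto simp: dual_rep_def add[OF x] fun_eq_iff)
  next
    fix x c and \<xi> :: "'w \<Rightarrow> 'k" assume x: "\<xi> \<in> dual_space sw"
    show "dual_rep \<rho> (sg c x) \<xi> = dual_scale c (dual_rep \<rho> x \<xi>)"
      using R by (auto simp: dual_rep_def dual_scale_def scl[OF x] fun_eq_iff)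
    show "dual_rep \<rho> x (dual_scale c \<xi>) = dual_scale c (dual_rep \<rho> x \<xi>)"
      by (auto simp: dual_rep_def dual_scale_def fun_eq_iff)
  next
    fix x and \<xi> \<eta> :: "'w \<Rightarrow> 'k"
    show "dual_rep \<rho> x (\<xi> + \<eta>) = dual_rep \<rho> x \<xi> + dual_rep \<rho> x \<eta>"
      by (auto simp: dual_rep_def fun_eq_iff)
    show "dual_map T (\<xi> + \<eta>) = dual_map T \<xi> + dual_map T \<eta>"
      by (auto simp: dual_map_def fun_eq_iff)
  next
    fix c and \<xi> :: "'w \<Rightarrow> 'k"
    show "dual_map T (dual_scale c \<xi>) = dual_scale c (dual_map T \<xi>)"
      by (auto simp: dual_map_def dual_scale_def fun_eq_iff)
  next
    fix x and \<xi> :: "'w \<Rightarrow> 'k"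
    show "dual_map T (dual_rep \<rho> x \<xi>) = dual_rep \<rho> (E x) \<xi>"
      using R by (auto simp: dual_map_def dual_rep_def fun_eq_iff)
    show "dual_rep \<rho> (E x) \<xi> = dual_rep \<rho> x (dual_map T \<xi>)"
      using R by (auto simp: dual_map_def dual_rep_def fun_eq_iff)
  qed
qed

end
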